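(* Let $d,N\in\mathbb N$ with $d\le N$ and let $\Pi$ be a set of two-coloured partitions containing the four mixed-coloured pair partitions. Let $x=(x_{ij})_{i\in[N],j\in[d]}$ be the generators of $C(X_{N,d}(\Pi))$ and $u=(u_{ij})$ the fundamental matrix of $G_N(\Pi)$. Then $x_{ij}\mapsto u_{ij}$ ($1\le i\le N$, $1\le j\le d$) defines a unital $*$-homomorphism $C(X_{N,d}(\Pi))\to C(G_N(\Pi))$.
   Context: $[n]:=\{1,\dots,n\}$; $[N]^0=\{\epsilon\}$. A two-coloured partition on $k$ upper and $l$ lower points is a partition of the $k$ upper and $l$ lower points (each row ordered left to right) into non-empty disjoint blocks, each point coloured $1$ or $*$; $\mathcal P(\omega,\omega')$ denotes those with upper colour word $\omega\in\{1,*\}^k$ and lower colour word $\omega'\in\{1,*\}^l$. Through-blocks contain upper and lower points; $tb(p)$ is their number. A row labeling is valid if points of that row in a common block carry equal labels; $\epsilon$ is valid. Decomposition of labelings of $p$: $T_0$/$T'_0$ = invalid upper/lower row labelings; $r=N^{tb(p)}$; enumerate assignments of labels in $[N]$ to the through-blocks as $1,\dots,r$; $T_i$/$T'_i$ = valid upper/lower row labelings giving each through-block the label of the $i$-th assignment. $a^1:=a$; empty products equal $\mathbb 1$. Mixed-coloured pair partitions: the four partitions consisting of one block of two oppositely coloured points, both in the upper row or both in the lower row. $R^{Gr}_p(u)$ for an $N\times N$ matrix $u$: (i) $\sum_{t\in T_i}u_{t_1\gamma_1}^{\omega_1}\cdots u_{t_k\gamma_k}^{\omega_k}=\sum_{t'\in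 T'_j}u_{\gamma'_1t'_1}^{\omega'_1}\cdots u_{\gamma'_lt'_l}^{\omega'_l}$ for $1\le i,j\le r$, $\gamma\in T_j$, $\gamma'\in T'_i$; (ii) $\sum_{t\in T_i}u_{t_1\gamma_1}^{\omega_1}\cdots u_{t_k\gamma_k}^{\omega_k}=0$ for $\gamma\in T_0$; (iii) $\sum_{t'\in T'_j}u_{\gamma'_1t'_1}^{\omega'_1}\cdots u_{\gamma'_lt'_l}^{\omega'_l}=0$ for $\gamma'\in T'_0$. $C(G_N(\Pi))$ = universal unital $C^*$-algebra generated by $u_{ij}$ ($1\le i,j\le N$) subject to $R^{Gr}_p(u)$ for all $p\in\Pi$. $R^{Sp}_p(x)$ for $x=(x_{ij})_{i\in[N],j\in[d]}$: (i) $\sum_{t\in T_i}x_{t_1\gamma_1}^{\omega_1}\cdots x_{t_k\gamma_k}^{\omega_k}=\sum_{t'\in T'_i}x_{t'_1\gamma'_1}^{\omega'_1}\cdots x_{t'_l\gamma'_l}^{\omega'_l}$ for $1\le i,j\le r$, $\gamma\in T_j\cap[d]^k$, $\gamma'\in T'_j\cap[d]^l$; (ii) $\sum_{t\in T_i}x_{t_1\gamma_1}^{\omega_1}\cdots x_{t_k\gamma_k}^{\omega_k}=0$ for $\gamma\in T_0\cap[d]^k$; (iii) $\sum_{t'\in T'_i}x_{t'_1\gamma'_1}^{\omega'_1}\cdots x_{t'_l\gamma'_l}^{\omega'_l}=0$ for $\gamma'\in T'_0\cap[d]^l$. $C(X_{N,d}(\Pi))$ = universal unital $C^*$-algebra generated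 by $x_{ij}$ subject to $R^{Sp}_p(x)$ for all $p\in\Pi$ (partition quantum space of $d$ vectors). *)

theory Defs
  imports Complex_Main
begin

class cstar_algebra = real_normed_algebra_1 + banach +
  fixes invol :: "'a \<Rightarrow> 'a"
    and cscale :: "complex \<Rightarrow> 'a \<Rightarrow> 'a"
  assumes invol_invol: "invol (invol a) = a"
    and invol_add: "invol (a + b) = invol a + invol b"
    and invol_mult: "invol (a * b) = invol b * invol a"
    and invol_cscale: "invol (cscale c a) = cscale (cnj c) (invol a)"
    and cscale_add_left: "cscale (c + e) a = cscale c a + cscale e a"
    and cscale_add_right: "cscale c (a + b) = cscale c a + cscale c b"
    and cscale_mult: "cscale (c * e) a = cscale c (cscale e a)"
    and cscale_of_real: "cscale (complex_of_real r) a = scaleR r a"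
    and cscale_mult_left: "cscale c (a * b) = cscale c a * b"
    and cscale_mult_right: "cscale c (a * b) = a * cscale c b"
    and norm_cscale: "norm (cscale c a) = cmod c * norm a"
    and cstar_identity: "norm (invol a * a) = (norm a)^2"

datatype colour = White | Black  \<comment> \<open>White = colour 1, Black = colour *\<close>

datatype point = Up nat | Lo nat  \<comment> \<open>upper / lower points, 0-indexed left to right\<close>

text \<open>A two-coloured partition: upper colour word, lower colour word, and the block
  structure as an equivalence relation on the points (blocks = equivalence classes).\<close>
datatype partition = Part "colour list" "colour list" "(point \<times> point) set"

fun ucols :: "partition \<Rightarrow> colour list" where "ucols (Part w w' R) = w"
fun lcols :: "partition \<Rightarrow> colour list" where "lcols (Part w w' R) = w'"
fun blocks_rel :: "partition \<Rightarrow> (point \<times> point) set" where "blocks_rel (Part w w' R) = R"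

definition points :: "partition \<Rightarrow> point set" where
  "points p = Up ` {..<length (ucols p)} \<union> Lo ` {..<length (lcols p)}"

definition is_partition :: "partition \<Rightarrow> bool" where
  "is_partition p \<longleftrightarrow> equiv (points p) (blocks_rel p)"

definition blocks :: "partition \<Rightarrow> point set set" where
  "blocks p = points p // blocks_rel p"

definition through_blocks :: "partition \<Rightarrow> point set set" where
  "through_blocks p = {B \<in> blocks p. (\<exists>a. Up a \<in> B) \<and> (\<exists>b. Lo b \<in> B)}"

definition tb :: "partition \<Rightarrow> nat" where
  "tb p = card (through_blocks p)"

definition pair_rel :: "(nat \<Rightarrow> point) \<Rightarrow> (point \<times> point) set" where
  "pair_rel P = {P 0, P 1} \<times> {P 0, P 1}"

definition mixed_pairs :: "partition set" where
  "mixed_pairs = {Part [White, Black] [] (pair_rel Up), Part [Black, White] [] (pair_rel Up),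
                  Part [] [White, Black] (pair_rel Lo), Part [] [Black, White] (pair_rel Lo)}"

definition valid_up :: "partition \<Rightarrow> nat list \<Rightarrow> bool" where
  "valid_up p t \<longleftrightarrow> (\<forall>a<length (ucols p). \<forall>b<length (ucols p).
      (Up a, Up b) \<in> blocks_rel p \<longrightarrow> t ! a = t ! b)"

definition valid_lo :: "partition \<Rightarrow> nat list \<Rightarrow> bool" where
  "valid_lo p t \<longleftrightarrow> (\<forall>a<length (lcols p). \<forall>b<length (lcols p).
      (Lo a, Lo b) \<in> blocks_rel p \<longrightarrow> t ! a = t ! b)"

definition labelings :: "nat \<Rightarrow> nat \<Rightarrow> nat list set" where
  "labelings N k = {t. length t = k \<and> set t \<subseteq> {1..N}}"

text \<open>Assignments of labels in [N] to the through-blocks (indexing the sets T_i).\<close>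
definition assignments :: "nat \<Rightarrow> partition \<Rightarrow> (point set \<Rightarrow> nat) set" where
  "assignments N p = {f. \<forall>B \<in> through_blocks p. f B \<in> {1..N}}"

definition T0 :: "nat \<Rightarrow> partition \<Rightarrow> nat list set" where
  "T0 N p = {t \<in> labelings N (length (ucols p)). \<not> valid_up p t}"

definition T0' :: "nat \<Rightarrow> partition \<Rightarrow> nat list set" where
  "T0' N p = {t \<in> labelings N (length (lcols p)). \<not> valid_lo p t}"

definition T :: "nat \<Rightarrow> partition \<Rightarrow> (point set \<Rightarrow> nat) \<Rightarrow> nat list set" where
  "T N p f = {t \<in> labelings N (length (ucols p)). valid_up p t \<and>
      (\<forall>B \<in> through_blocks p. \<forall>a<length (ucols p). Up a \<in> B \<longrightarrow> t ! a = f B)}"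

definition T' :: "nat \<Rightarrow> partition \<Rightarrow> (point set \<Rightarrow> nat) \<Rightarrow> nat list set" where
  "T' N p f = {t \<in> labelings N (length (lcols p)). valid_lo p t \<and>
      (\<forall>B \<in> through_blocks p. \<forall>a<length (lcols p). Lo a \<in> B \<longrightarrow> t ! a = f B)}"

definition cpow :: "colour \<Rightarrow> 'a::cstar_algebra \<Rightarrow> 'a" where
  "cpow c a = (case c of White \<Rightarrow> a | Black \<Rightarrow> invol a)"

definition mono :: "(nat \<Rightarrow> nat \<Rightarrow> 'a::cstar_algebra) \<Rightarrow> colour list \<Rightarrow> nat list \<Rightarrow> nat list \<Rightarrow> 'a" where
  "mono a w is js = prod_list (map (\<lambda>n. cpow (w ! n) (a (is ! n) (js ! n))) [0..<length w])"

definition R_Gr :: "nat \<Rightarrow> partition \<Rightarrow> (nat \<Rightarrow> nat \<Rightarrow> 'a::cstar_algebra) \<Rightarrow> bool" where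
  "R_Gr N p u \<longleftrightarrow>
     (\<forall>f \<in> assignments N p. \<forall>g \<in> assignments N p. \<forall>\<gamma> \<in> T N p g. \<forall>\<gamma>' \<in> T' N p f.
        (\<Sum>t \<in> T N p f. mono u (ucols p) t \<gamma>) = (\<Sum>t' \<in> T' N p g. mono u (lcols p) \<gamma>' t'))
   \<and> (\<forall>f \<in> assignments N p. \<forall>\<gamma> \<in> T0 N p. (\<Sum>t \<in> T N p f. mono u (ucols p) t \<gamma>) = 0)
   \<and> (\<forall>g \<in> assignments N p. \<forall>\<gamma>' \<in> T0' N p. (\<Sum>t' \<in> T' N p g. mono u (lcols p) \<gamma>' t') = 0)"

definition R_Sp :: "nat \<Rightarrow> nat \<Rightarrow> partition \<Rightarrow> (nat \<Rightarrow> nat \<Rightarrow> 'a::cstar_algebra) \<Rightarrow> bool" where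
  "R_Sp N d p x \<longleftrightarrow>
     (\<forall>f \<in> assignments N p. \<forall>g \<in> assignments N p.
        \<forall>\<gamma> \<in> T N p g \<inter> labelings d (length (ucols p)).
        \<forall>\<gamma>' \<in> T' N p g \<inter> labelings d (length (lcols p)).
        (\<Sum>t \<in> T N p f. mono x (ucols p) t \<gamma>) = (\<Sum>t' \<in> T' N p f. mono x (lcols p) t' \<gamma>'))
   \<and> (\<forall>f \<in> assignments N p. \<forall>\<gamma> \<in> T0 N p \<inter> labelings d (length (ucols p)).
        (\<Sum>t \<in> T N p f. mono x (ucols p) t \<gamma>) = 0)
   \<and> (\<forall>f \<in> assignments N p. \<forall>\<gamma>' \<in> T0' N p \<inter> labelings d (length (lcols p)).
        (\<Sum>t' \<in> T' N p f. mono x (lcols p) t' \<gamma>') = 0)"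

end

theory Submission
  imports Defs
begin


lemma invol_zero: "invol (0::'a::cstar_algebra) = 0"
  using invol_add[of "0::'a" 0] by simp

lemma invol_sum: "invol (sum f A) = (\<Sum>x\<in>A. invol (f x :: 'a::cstar_algebra))"
  by (induct A rule: infinite_finite_induct) (auto simp: invol_zero invol_add)

lemma invol_if: "invol (if b then x else (0::'a::cstar_algebra)) = (if b then invol x else 0)"
  by (simp add: invol_zero)

lemma lab_0: "labelings N 0 = {[]}"
  by (auto simp: labelings_def)

lemma lab_Suc: "labelings N (Suc k) = (\<lambda>(a,t). a#t) ` ({1..N} \<times> labelings N k)"
  by (auto simp: labelings_def length_Suc_conv image_iff)

lemma finite_lab: "finite (labelings N k)"
  by (induct k) (auto simp: lab_0 lab_Suc)

lemma sum_lab_Suc: "(\<Sum>q\<in>labelings N (Suc k). F q) = (\<Sum>a\<in>{1..N}. \<Sum>q\<in>labelings N k. F (a#q))"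
proof -
  have "inj_on (\<lambda>(a,t). a#t) ({1..N} \<times> labelings N k)" by (auto simp: inj_on_def)
  then have "(\<Sum>q\<in>labelings N (Suc k). F q) = (\<Sum>x\<in>{1..N} \<times> labelings N k. (F \<circ> (\<lambda>(a,t). a#t)) x)"
    unfolding lab_Suc by (rule sum.reindex)
  also have "\<dots> = (\<Sum>a\<in>{1..N}. \<Sum>q\<in>labelings N k. F (a#q))"
    by (simp add: sum.cartesian_product finite_lab split_def)
  finally show ?thesis .
qed

lemma mono_Nil: "mono u [] is js = 1"
  by (simp add: mono_def)

lemma mono_Cons: "mono u (c#w) (i#is) (j#js) = cpow c (u i j) * mono u w is js"
  by (simp add: mono_def upt_conv_Cons map_Suc_upt[symmetric] o_def del: upt_Suc)


lemma pair_tb: "through_blocks (Part w w' (pair_rel P)) = {}" if "P = Up \<or> P = Lo" "w = [] \<or> w' = []"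
  using that by (auto simp: through_blocks_def blocks_def quotient_def points_def pair_rel_def)

lemma sum_diag: "(\<Sum>t\<in>(\<lambda>a. [a,a]) ` {1..N}. F t) = (\<Sum>a\<in>{1..N}. F [a,a])"
  by (subst sum.reindex) (auto simp: inj_on_def)

lemma up_pair:
  assumes "R_Gr N (Part [c1,c2] [] (pair_rel Up)) u" "b \<in> {1..N}" "e \<in> {1..N}"
  shows "(\<Sum>a\<in>{1..N}. cpow c1 (u a b) * cpow c2 (u a e)) = (if b = e then 1 else 0)"
proof -
  let ?p = "Part [c1,c2] [] (pair_rel Up)"
  have tb: "through_blocks ?p = {}" by (rule pair_tb) auto
  have vu: "valid_up ?p t \<longleftrightarrow> t!0 = t!1" for t
    by (auto simp: valid_up_def pair_rel_def less_2_cases_iff)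
  have lab2: "t \<in> labelings N 2 \<longleftrightarrow> (\<exists>x y. t = [x,y] \<and> x \<in> {1..N} \<and> y \<in> {1..N})" for t
    by (auto simp: labelings_def numeral_2_eq_2 length_Suc_conv)
  have T: "T N ?p f = (\<lambda>a. [a,a]) ` {1..N}" for f
    by (auto simp: T_def tb vu labelings_def length_Suc_conv)
  have T': "T' N ?p f = {[]}" for f
    by (auto simp: T'_def valid_lo_def labelings_def)
  have S: "(\<Sum>t\<in>T N ?p f. mono u [c1,c2] t [b,e]) = (\<Sum>a\<in>{1..N}. cpow c1 (u a b) * cpow c2 (u a e))" for f
    unfolding T sum_diag by (simp add: mono_Cons mono_Nil)
  have A: "assignments N ?p = UNIV" by (simp add: assignments_def tb)
  show ?thesis
  proof (cases "b = e")
    case True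
    have "[b,b] \<in> T N ?p undefined" using assms T by auto
    with assms(1) have "(\<Sum>t\<in>T N ?p undefined. mono u [c1,c2] t [b,b]) = (\<Sum>t'\<in>T' N ?p undefined. mono u [] [] t')"
      unfolding R_Gr_def A T' by auto
    then show ?thesis using S[of undefined] True by (simp add: T' mono_Nil)
  next
    case False
    have "[b,e] \<in> T0 N ?p" using assms False by (auto simp: T0_def vu labelings_def)
    with assms(1) have "(\<Sum>t\<in>T N ?p undefined. mono u [c1,c2] t [b,e]) = 0"
      unfolding R_Gr_def A by auto
    then show ?thesis using S[of undefined] False by simp
  qed
qed

lemma lo_pair:
  assumes "R_Gr N (Part [] [c1,c2] (pair_rel Lo)) u" "b \<in> {1..N}" "e \<in> {1..N}"
  shows "(\<Sum>a\<in>{1..N}. cpow c1 (u b a) * cpow c2 (u e a)) = (if b = e then 1 else 0)"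
proof -
  let ?p = "Part [] [c1,c2] (pair_rel Lo)"
  have tb: "through_blocks ?p = {}" by (rule pair_tb) auto
  have vu: "valid_lo ?p t \<longleftrightarrow> t!0 = t!1" for t
    by (auto simp: valid_lo_def pair_rel_def less_2_cases_iff)
  have lab2: "t \<in> labelings N 2 \<longleftrightarrow> (\<exists>x y. t = [x,y] \<and> x \<in> {1..N} \<and> y \<in> {1..N})" for t
    by (auto simp: labelings_def numeral_2_eq_2 length_Suc_conv)
  have T': "T' N ?p f = (\<lambda>a. [a,a]) ` {1..N}" for f
    by (auto simp: T'_def tb vu labelings_def length_Suc_conv)
  have T: "T N ?p f = {[]}" for f
    by (auto simp: T_def valid_up_def labelings_def)
  have S: "(\<Sum>t\<in>T' N ?p f. mono u [c1,c2] [b,e] t) = (\<Sum>a\<in>{1..N}. cpow c1 (u b a) * cpow c2 (u e a))" for f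
    unfolding T' sum_diag by (simp add: mono_Cons mono_Nil)
  have A: "assignments N ?p = UNIV" by (simp add: assignments_def tb)
  show ?thesis
  proof (cases "b = e")
    case True
    have "[b,b] \<in> T' N ?p undefined" using assms T' by auto
    with assms(1) have "(\<Sum>t\<in>T N ?p undefined. mono u [] t []) = (\<Sum>t'\<in>T' N ?p undefined. mono u [c1,c2] [b,b] t')"
      unfolding R_Gr_def A T by auto
    then show ?thesis using S[of undefined] True by (simp add: T mono_Nil)
  next
    case False
    have "[b,e] \<in> T0' N ?p" using assms False by (auto simp: T0'_def vu labelings_def)
    with assms(1) have "(\<Sum>t\<in>T' N ?p undefined. mono u [c1,c2] [b,e] t) = 0"
      unfolding R_Gr_def A by auto
    then show ?thesis using S[of undefined] False by simp
  qed
qed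


lemma invol_one: "invol (1::'a::cstar_algebra) = 1"
proof -
  have "invol (1::'a) = invol 1 * invol (invol 1)" by (simp add: invol_invol)
  also have "\<dots> = invol (invol 1 * 1)" by (simp only: invol_mult)
  finally show ?thesis by (simp add: invol_invol)
qed

lemma labE_Cons: "r \<in> labelings N (Suc n) \<Longrightarrow> (\<And>b r'. r = b # r' \<Longrightarrow> b \<in> {1..N} \<Longrightarrow> r' \<in> labelings N n \<Longrightarrow> P) \<Longrightarrow> P"
  by (auto simp: lab_Suc)

lemma I1:
  fixes u :: "nat \<Rightarrow> nat \<Rightarrow> 'a::cstar_algebra"
  assumes row: "\<And>c b e. b \<in> {1..N} \<Longrightarrow> e \<in> {1..N} \<Longrightarrow>
      (\<Sum>a\<in>{1..N}. invol (cpow c (u b a)) * cpow c (u e a)) = (if b = e then 1 else 0)"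
  shows "r \<in> labelings N (length w) \<Longrightarrow> s \<in> labelings N (length w) \<Longrightarrow>
    (\<Sum>q\<in>labelings N (length w). invol (mono u w r q) * mono u w s q) = (if r = s then 1 else 0)"
proof (induction w arbitrary: r s)
  case Nil
  then show ?case by (simp add: lab_0 mono_Nil invol_one)
next
  case (Cons c w)
  from Cons.prems(1) obtain b r' where r: "r = b # r'" "b \<in> {1..N}" "r' \<in> labelings N (length w)"
    by (auto elim: labE_Cons)
  from Cons.prems(2) obtain e s' where s: "s = e # s'" "e \<in> {1..N}" "s' \<in> labelings N (length w)"
    by (auto elim: labE_Cons)
  let ?M = "mono u w"
  have "(\<Sum>q\<in>labelings N (length (c#w)). invol (mono u (c#w) r q) * mono u (c#w) s q)
      = (\<Sum>a\<in>{1..N}. \<Sum>q\<in>labelings N (length w). invol (?M r' q) * (invol (cpow c (u b a)) * cpow c (u e a)) * ?M s' q)"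
    by (simp add: sum_lab_Suc r s mono_Cons invol_mult mult.assoc)
  also have "\<dots> = (\<Sum>q\<in>labelings N (length w). invol (?M r' q) * (\<Sum>a\<in>{1..N}. invol (cpow c (u b a)) * cpow c (u e a)) * ?M s' q)"
    by (subst sum.swap) (simp add: sum_distrib_left sum_distrib_right)
  also have "\<dots> = (if b = e then 1 else 0) * (\<Sum>q\<in>labelings N (length w). invol (?M r' q) * ?M s' q)"
    unfolding row[OF r(2) s(2)] by (simp add: sum_distrib_left)
  also have "\<dots> = (if r = s then 1 else 0)"
    using Cons.IH[OF r(3) s(3)] by (simp add: r s)
  finally show ?case .
qed

lemma I2:
  fixes u :: "nat \<Rightarrow> nat \<Rightarrow> 'a::cstar_algebra"
  assumes col: "\<And>c b e. b \<in> {1..N} \<Longrightarrow> e \<in> {1..N} \<Longrightarrow>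
      (\<Sum>a\<in>{1..N}. cpow c (u a b) * invol (cpow c (u a e))) = (if b = e then 1 else 0)"
  shows "r \<in> labelings N (length w) \<Longrightarrow> s \<in> labelings N (length w) \<Longrightarrow>
    (\<Sum>q\<in>labelings N (length w). mono u w q r * invol (mono u w q s)) = (if r = s then 1 else 0)"
proof (induction w arbitrary: r s)
  case Nil
  then show ?case by (simp add: lab_0 mono_Nil invol_one)
next
  case (Cons c w)
  from Cons.prems(1) obtain b r' where r: "r = b # r'" "b \<in> {1..N}" "r' \<in> labelings N (length w)"
    by (auto elim: labE_Cons)
  from Cons.prems(2) obtain e s' where s: "s = e # s'" "e \<in> {1..N}" "s' \<in> labelings N (length w)"
    by (auto elim: labE_Cons)
  let ?M = "mono u w"
  have "(\<Sum>q\<in>labelings N (length (c#w)). mono u (c#w) q r * invol (mono u (c#w) q s))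
      = (\<Sum>a\<in>{1..N}. cpow c (u a b) * (\<Sum>q\<in>labelings N (length w). ?M q r' * invol (?M q s')) * invol (cpow c (u a e)))"
    by (simp add: sum_lab_Suc r s mono_Cons invol_mult mult.assoc sum_distrib_left sum_distrib_right)
  also have "\<dots> = (if r' = s' then 1 else 0) * (\<Sum>a\<in>{1..N}. cpow c (u a b) * invol (cpow c (u a e)))"
    using Cons.IH[OF r(3) s(3)] by (simp add: sum_distrib_left)
  also have "\<dots> = (if r = s then 1 else 0)"
    unfolding col[OF r(2) s(2)] by (simp add: r s)
  finally show ?case .
qed



definition validP :: "partition \<Rightarrow> (nat \<Rightarrow> point) \<Rightarrow> nat \<Rightarrow> nat list \<Rightarrow> bool" where
  "validP p P n t \<longleftrightarrow> (\<forall>a<n. \<forall>b<n. (P a, P b) \<in> blocks_rel p \<longrightarrow> t ! a = t ! b)"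

definition TP :: "nat \<Rightarrow> partition \<Rightarrow> (nat \<Rightarrow> point) \<Rightarrow> nat \<Rightarrow> (point set \<Rightarrow> nat) \<Rightarrow> nat list set" where
  "TP N p P n f = {t \<in> labelings N n. validP p P n t \<and>
      (\<forall>B \<in> through_blocks p. \<forall>a<n. P a \<in> B \<longrightarrow> t ! a = f B)}"

lemma valid_up_P: "valid_up p t = validP p Up (length (ucols p)) t"
  by (simp add: valid_up_def validP_def)
lemma valid_lo_P: "valid_lo p t = validP p Lo (length (lcols p)) t"
  by (simp add: valid_lo_def validP_def)
lemma T_P: "T N p f = TP N p Up (length (ucols p)) f"
  by (simp add: T_def TP_def valid_up_P)
lemma T'_P: "T' N p f = TP N p Lo (length (lcols p)) f"
  by (simp add: T'_def TP_def valid_lo_P)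

definition goodP :: "partition \<Rightarrow> (nat \<Rightarrow> point) \<Rightarrow> nat \<Rightarrow> bool" where
  "goodP p P n \<longleftrightarrow> is_partition p \<and> (\<forall>a. P a \<in> points p \<longrightarrow> a < n) \<and> (\<forall>B\<in>through_blocks p. \<exists>a. P a \<in> B)"

lemma good_up: "is_partition p \<Longrightarrow> goodP p Up (length (ucols p))"
  by (auto simp: goodP_def points_def through_blocks_def)
lemma good_lo: "is_partition p \<Longrightarrow> goodP p Lo (length (lcols p))"
  by (auto simp: goodP_def points_def through_blocks_def)

lemma tb_quot: "B \<in> through_blocks p \<Longrightarrow> B \<in> points p // blocks_rel p"
  by (simp add: through_blocks_def blocks_def)

lemma tb_rel:
  assumes "is_partition p" "B \<in> through_blocks p" "x \<in> B" "y \<in> B"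
  shows "(x, y) \<in> blocks_rel p"
proof -
  have eq: "equiv (points p) (blocks_rel p)" using assms(1) by (simp add: is_partition_def)
  from tb_quot[OF assms(2)] obtain z where "B = blocks_rel p `` {z}" by (auto elim: quotientE)
  then have "(z,x) \<in> blocks_rel p" "(z,y) \<in> blocks_rel p" using assms by auto
  then show ?thesis using eq by (meson equivE symE transE)
qed

lemma tb_closed:
  assumes "is_partition p" "B \<in> through_blocks p" "x \<in> B" "(x, y) \<in> blocks_rel p"
  shows "y \<in> B"
proof -
  have eq: "equiv (points p) (blocks_rel p)" using assms(1) by (simp add: is_partition_def)
  from tb_quot[OF assms(2)] obtain z where "B = blocks_rel p `` {z}" by (auto elim: quotientE)
  then show ?thesis using assms eq by (auto elim!: equivE dest: transD)
qed

lemma tb_pts: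
  assumes "is_partition p" "B \<in> through_blocks p" "x \<in> B"
  shows "x \<in> points p"
proof -
  have eq: "equiv (points p) (blocks_rel p)" using assms(1) by (simp add: is_partition_def)
  from tb_quot[OF assms(2)] obtain z where "B = blocks_rel p `` {z}" by (auto elim: quotientE)
  then have "B \<subseteq> points p" using equiv_type[OF eq] by blast
  then show ?thesis using assms by auto
qed

lemma tb_disj:
  assumes "is_partition p" "B \<in> through_blocks p" "B' \<in> through_blocks p" "x \<in> B" "x \<in> B'"
  shows "B = B'"
proof -
  have eq: "equiv (points p) (blocks_rel p)" using assms(1) by (simp add: is_partition_def)
  show ?thesis using quotient_disj[OF eq tb_quot[OF assms(2)] tb_quot[OF assms(3)]] assms by auto
qed

lemma tb_some:
  assumes "is_partition p" "B \<in> through_blocks p" "x \<in> B"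
  shows "(SOME B'. B' \<in> through_blocks p \<and> x \<in> B') = B"
proof -
  have "(SOME B'. B' \<in> through_blocks p \<and> x \<in> B') \<in> through_blocks p \<and> x \<in> (SOME B'. B' \<in> through_blocks p \<and> x \<in> B')"
    by (rule someI[of _ B]) (use assms in auto)
  then show ?thesis using tb_disj[OF assms(1) assms(2)] assms(3) by blast
qed

definition relab :: "partition \<Rightarrow> (nat \<Rightarrow> point) \<Rightarrow> (point set \<Rightarrow> nat) \<Rightarrow> nat list \<Rightarrow> nat list" where
  "relab p P f t = map (\<lambda>a. if \<exists>B\<in>through_blocks p. P a \<in> B
      then f (SOME B. B \<in> through_blocks p \<and> P a \<in> B) else t ! a) [0..<length t]"

lemma relab_nth:
  assumes "is_partition p" "a < length t"
  shows "relab p P f t ! a = (if \<exists>B\<in>through_blocks p. P a \<in> B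
      then f (SOME B. B \<in> through_blocks p \<and> P a \<in> B) else t ! a)"
  using assms by (simp add: relab_def)

lemma relab_in:
  assumes "is_partition p" "f \<in> assignments N p" "t \<in> labelings N n" "validP p P n t"
  shows "relab p P f t \<in> TP N p P n f"
proof -
  have len: "length t = n" using assms(3) by (simp add: labelings_def)
  have nth: "relab p P f t ! a = (if \<exists>B\<in>through_blocks p. P a \<in> B
      then f (SOME B. B \<in> through_blocks p \<and> P a \<in> B) else t ! a)" if "a < n" for a
    using relab_nth[OF assms(1)] that len by simp
  have lab: "relab p P f t \<in> labelings N n"
  proof -
    have "relab p P f t ! a \<in> {1..N}" if "a < n" for a
    proof (cases "\<exists>B\<in>through_blocks p. P a \<in> B")
      case True
      then obtain B where B: "B \<in> through_blocks p" "P a \<in> B" by auto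
      then show ?thesis using nth[OF that] tb_some[OF assms(1) B] assms(2)
        by (auto simp: assignments_def)
    next
      case False
      have "t ! a \<in> set t" using that len by simp
      then have "t ! a \<in> {1..N}" using assms(3) by (auto simp: labelings_def)
      then show ?thesis using nth[OF that] False by simp
    qed
    note * = this
    have L: "length (relab p P f t) = n" by (simp add: relab_def len)
    moreover have "set (relab p P f t) \<subseteq> {1..N}"
    proof
      fix x assume "x \<in> set (relab p P f t)"
      then obtain a where "a < n" "x = relab p P f t ! a" using L by (auto simp: in_set_conv_nth)
      then show "x \<in> {1..N}" using * by simp
    qed
    ultimately show ?thesis by (simp add: labelings_def)
  qed
  have val: "validP p P n (relab p P f t)"
    unfolding validP_def
  proof (intro allI impI)
    fix a b assume ab: "a < n" "b < n" "(P a, P b) \<in> blocks_rel p"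
    show "relab p P f t ! a = relab p P f t ! b"
    proof (cases "\<exists>B\<in>through_blocks p. P a \<in> B")
      case True
      then obtain B where B: "B \<in> through_blocks p" "P a \<in> B" by auto
      have Bb: "P b \<in> B" using tb_closed[OF assms(1) B ab(3)] .
      show ?thesis using nth[OF ab(1)] nth[OF ab(2)] tb_some[OF assms(1) B(1)] B Bb by auto
    next
      case False
      have "\<not> (\<exists>B\<in>through_blocks p. P b \<in> B)"
      proof
        assume "\<exists>B\<in>through_blocks p. P b \<in> B"
        then obtain B where B: "B \<in> through_blocks p" "P b \<in> B" by auto
        have eq: "equiv (points p) (blocks_rel p)" using assms(1) by (simp add: is_partition_def)
        have "(P b, P a) \<in> blocks_rel p" using ab(3) eq by (meson equivE symE)
        then show False using tb_closed[OF assms(1) B] False B(1) by blast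
      qed
      then show ?thesis using nth[OF ab(1)] nth[OF ab(2)] False assms(4) ab by (simp add: validP_def)
    qed
  qed
  have "relab p P f t ! a = f B" if "B \<in> through_blocks p" "a < n" "P a \<in> B" for B a
    using nth[OF that(2)] tb_some[OF assms(1) that(1) that(3)] that by auto
  then show ?thesis using lab val by (auto simp: TP_def)
qed

lemma relab_id:
  assumes "is_partition p" "t \<in> TP N p P n g"
  shows "relab p P g t = t"
proof -
  have len: "length t = n" using assms(2) by (simp add: TP_def labelings_def)
  show ?thesis
  proof (rule nth_equalityI)
    show "length (relab p P g t) = length t" by (simp add: relab_def)
    fix a assume "a < length (relab p P g t)"
    then have a: "a < length t" by (simp add: relab_def)
    show "relab p P g t ! a = t ! a"
    proof (cases "\<exists>B\<in>through_blocks p. P a \<in> B")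
      case True
      then obtain B where B: "B \<in> through_blocks p" "P a \<in> B" by auto
      then show ?thesis using relab_nth[OF assms(1) a] tb_some[OF assms(1) B] assms(2) a len
        by (auto simp: TP_def)
    qed (use relab_nth[OF assms(1) a] in auto)
  qed
qed

lemma relab_relab:
  assumes "is_partition p"
  shows "relab p P g (relab p P f t) = relab p P g t"
  by (rule nth_equalityI) (auto simp: relab_nth[OF assms] relab_def)

lemma TP_valid: "t \<in> TP N p P n f \<Longrightarrow> t \<in> labelings N n \<and> validP p P n t"
  by (simp add: TP_def)

lemma TP_bij:
  assumes "is_partition p" "f \<in> assignments N p" "g \<in> assignments N p"
  shows "bij_betw (relab p P f) (TP N p P n g) (TP N p P n f)"
proof (rule bij_betw_byWitness[where f' = "relab p P g"])
  show "\<forall>a\<in>TP N p P n g. relab p P g (relab p P f a) = a"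
    using relab_relab[OF assms(1)] relab_id[OF assms(1)] by auto
  show "\<forall>a\<in>TP N p P n f. relab p P f (relab p P g a) = a"
    using relab_relab[OF assms(1)] relab_id[OF assms(1)] by auto
  show "relab p P f ` TP N p P n g \<subseteq> TP N p P n f"
    using relab_in[OF assms(1,2)] TP_valid by blast
  show "relab p P g ` TP N p P n f \<subseteq> TP N p P n g"
    using relab_in[OF assms(1,3)] TP_valid by blast
qed

lemma TP_exists:
  assumes "is_partition p" "f \<in> assignments N p" "N \<ge> 1"
  shows "relab p P f (replicate n 1) \<in> TP N p P n f"
  by (rule relab_in[OF assms(1,2)]) (use assms(3) in \<open>auto simp: labelings_def validP_def\<close>)

lemma labels_of:
  assumes "goodP p P n" "t \<in> labelings N n" "validP p P n t"
  shows "\<exists>g\<in>assignments N p. t \<in> TP N p P n g"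
proof -
  have pp: "is_partition p" using assms(1) by (simp add: goodP_def)
  define g where "g B = t ! (SOME a. a < n \<and> P a \<in> B)" for B
  have ex: "(SOME a. a < n \<and> P a \<in> B) < n \<and> P (SOME a. a < n \<and> P a \<in> B) \<in> B" if "B \<in> through_blocks p" for B
  proof (rule someI_ex)
    have "\<exists>a. P a \<in> B" using assms(1) that by (simp add: goodP_def)
    then obtain a where "P a \<in> B" by blast
    moreover have "a < n" using tb_pts[OF pp that \<open>P a \<in> B\<close>] assms(1) by (auto simp: goodP_def)
    ultimately show "\<exists>a. a < n \<and> P a \<in> B" by blast
  qed
  have "g \<in> assignments N p"
    unfolding assignments_def
  proof (intro CollectI ballI)
    fix B assume "B \<in> through_blocks p"
    then have "t ! (SOME a. a < n \<and> P a \<in> B) \<in> set t" using ex assms(2) by (simp add: labelings_def)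
    then show "g B \<in> {1..N}" using assms(2) unfolding g_def labelings_def by blast
  qed
  moreover have "t \<in> TP N p P n g"
  proof -
    have "t ! a = g B" if "B \<in> through_blocks p" "a < n" "P a \<in> B" for B a
      using assms(3) tb_rel[OF pp that(1) that(3), of "P (SOME a. a < n \<and> P a \<in> B)"] ex[OF that(1)] that(2)
      by (auto simp: validP_def g_def)
    then show ?thesis using assms by (auto simp: TP_def)
  qed
  ultimately show ?thesis by blast
qed



definition D :: "partition \<Rightarrow> nat list \<Rightarrow> nat list \<Rightarrow> bool" where
  "D p s s' \<longleftrightarrow> valid_up p s \<and> valid_lo p s' \<and> (\<forall>B\<in>through_blocks p. \<forall>a<length (ucols p).
     \<forall>b<length (lcols p). Up a \<in> B \<longrightarrow> Lo b \<in> B \<longrightarrow> s ! a = s' ! b)"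

lemma lo_in_tb: "is_partition p \<Longrightarrow> B \<in> through_blocks p \<Longrightarrow> \<exists>b<length (lcols p). Lo b \<in> B"
  using tb_pts[of p B] by (auto simp: through_blocks_def points_def)
lemma up_in_tb: "is_partition p \<Longrightarrow> B \<in> through_blocks p \<Longrightarrow> \<exists>a<length (ucols p). Up a \<in> B"
  using tb_pts[of p B] by (auto simp: through_blocks_def points_def)

lemma TD1:
  assumes "is_partition p" "s' \<in> T' N p f"
  shows "{t\<in>labelings N (length (ucols p)). D p t s'} = T N p f"
proof (intro set_eqI iffI)
  fix t assume t: "t \<in> {t\<in>labelings N (length (ucols p)). D p t s'}"
  have "t ! a = f B" if H: "B \<in> through_blocks p" "a < length (ucols p)" "Up a \<in> B" for B a
  proof -
    obtain b where b: "b < length (lcols p)" "Lo b \<in> B" using lo_in_tb[OF assms(1) H(1)] by blast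
    then show ?thesis using t assms(2) H by (auto simp: D_def T'_def)
  qed
  then show "t \<in> T N p f" using t by (auto simp: T_def D_def)
next
  fix t assume t: "t \<in> T N p f"
  then show "t \<in> {t\<in>labelings N (length (ucols p)). D p t s'}"
    using assms(2) by (auto simp: T_def T'_def D_def)
qed

lemma TD2:
  assumes "is_partition p" "s \<in> T N p g"
  shows "{t\<in>labelings N (length (lcols p)). D p s t} = T' N p g"
proof (intro set_eqI iffI)
  fix t assume t: "t \<in> {t\<in>labelings N (length (lcols p)). D p s t}"
  have "t ! b = g B" if H: "B \<in> through_blocks p" "b < length (lcols p)" "Lo b \<in> B" for B b
  proof -
    obtain a where a: "a < length (ucols p)" "Up a \<in> B" using up_in_tb[OF assms(1) H(1)] by blast
    then show ?thesis using t assms(2) H by (force simp: D_def T_def)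
  qed
  then show "t \<in> T' N p g" using t by (auto simp: T'_def D_def)
next
  fix t assume t: "t \<in> T' N p g"
  then show "t \<in> {t\<in>labelings N (length (lcols p)). D p s t}"
    using assms(2) by (auto simp: T_def T'_def D_def)
qed

lemma sumD1:
  assumes "is_partition p" "s' \<in> T' N p f"
  shows "(\<Sum>t\<in>labelings N (length (ucols p)). if D p t s' then F t else 0) = (\<Sum>t\<in>T N p f. F t)"
  by (simp add: sum.inter_filter[symmetric] finite_lab TD1[OF assms])

lemma sumD2:
  assumes "is_partition p" "s \<in> T N p g"
  shows "(\<Sum>t\<in>labelings N (length (lcols p)). if D p s t then F t else 0) = (\<Sum>t\<in>T' N p g. F t)"
  by (simp add: sum.inter_filter[symmetric] finite_lab TD2[OF assms])

lemma labels_up: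
  assumes "is_partition p" "s \<in> labelings N (length (ucols p))" "valid_up p s"
  obtains g where "g \<in> assignments N p" "s \<in> T N p g"
  using labels_of[OF good_up[OF assms(1)] assms(2)] assms(3) by (auto simp: valid_up_P T_P)

lemma labels_lo:
  assumes "is_partition p" "s \<in> labelings N (length (lcols p))" "valid_lo p s"
  obtains g where "g \<in> assignments N p" "s \<in> T' N p g"
  using labels_of[OF good_lo[OF assms(1)] assms(2)] assms(3) by (auto simp: valid_lo_P T'_P)

lemma GrM:
  assumes pp: "is_partition p" and gr: "R_Gr N p u"
    and s: "s \<in> labelings N (length (ucols p))" and s': "s' \<in> labelings N (length (lcols p))"
  shows "(\<Sum>t\<in>labelings N (length (ucols p)). if D p t s' then mono u (ucols p) t s else 0)
       = (\<Sum>t'\<in>labelings N (length (lcols p)). if D p s t' then mono u (lcols p) s' t' else 0)"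
proof (cases "valid_lo p s'")
  case True
  then obtain f where f: "f \<in> assignments N p" "s' \<in> T' N p f" using labels_lo[OF pp s'] by blast
  show ?thesis
  proof (cases "valid_up p s")
    case True
    then obtain g where g: "g \<in> assignments N p" "s \<in> T N p g" using labels_up[OF pp s] by blast
    show ?thesis unfolding sumD1[OF pp f(2)] sumD2[OF pp g(2)]
      using gr f g by (auto simp: R_Gr_def)
  next
    case False
    then have "s \<in> T0 N p" using s by (simp add: T0_def)
    then show ?thesis unfolding sumD1[OF pp f(2)]
      using gr f False by (auto simp: R_Gr_def D_def)
  qed
next
  case False
  show ?thesis
  proof (cases "valid_up p s")
    case True
    then obtain g where g: "g \<in> assignments N p" "s \<in> T N p g" using labels_up[OF pp s] by blast
    have "s' \<in> T0' N p" using s' False by (simp add: T0'_def)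
    then show ?thesis unfolding sumD2[OF pp g(2)]
      using gr g False by (auto simp: R_Gr_def D_def)
  next
    case False
    then show ?thesis using \<open>\<not> valid_lo p s'\<close> by (simp add: D_def)
  qed
qed



lemma GrI:
  assumes pp: "is_partition p" and gr: "R_Gr N p u"
    and s: "s \<in> labelings N (length (ucols p))" and s': "s' \<in> labelings N (length (lcols p))"
  shows "(\<Sum>t\<in>labelings N (length (ucols p)). if D p t s' then invol (mono u (ucols p) t s) else 0)
       = (\<Sum>t'\<in>labelings N (length (lcols p)). if D p s t' then invol (mono u (lcols p) s' t') else 0)"
  using arg_cong[OF GrM[OF assms], of invol] by (simp add: invol_sum invol_if)

lemma Adj:
  fixes u :: "nat \<Rightarrow> nat \<Rightarrow> 'a::cstar_algebra"
  assumes pp: "is_partition p" and gr: "R_Gr N p u"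
    and row: "\<And>c b e. b \<in> {1..N} \<Longrightarrow> e \<in> {1..N} \<Longrightarrow>
      (\<Sum>a\<in>{1..N}. invol (cpow c (u b a)) * cpow c (u e a)) = (if b = e then 1 else 0)"
    and col: "\<And>c b e. b \<in> {1..N} \<Longrightarrow> e \<in> {1..N} \<Longrightarrow>
      (\<Sum>a\<in>{1..N}. cpow c (u a b) * invol (cpow c (u a e))) = (if b = e then 1 else 0)"
    and s: "s \<in> labelings N (length (ucols p))" and s': "s' \<in> labelings N (length (lcols p))"
  shows "(\<Sum>t'\<in>labelings N (length (lcols p)). if D p s t' then mono u (lcols p) t' s' else 0)
       = (\<Sum>t\<in>labelings N (length (ucols p)). if D p t s' then mono u (ucols p) s t else 0)"
proof -
  define K where "K = labelings N (length (ucols p))"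
  define L where "L = labelings N (length (lcols p))"
  define M where "M = mono u (ucols p)"
  define M' where "M' = mono u (lcols p)"
  have fK: "finite K" and fL: "finite L" by (simp_all add: K_def L_def finite_lab)
  have sK: "s \<in> K" and sL: "s' \<in> L" using s s' by (simp_all add: K_def L_def)
  have i1: "(\<Sum>q\<in>K. invol (M r q) * M s q) = (if r = s then 1 else 0)" if "r \<in> K" for r
    unfolding K_def M_def by (rule I1[OF row]) (use that s in \<open>auto simp: K_def\<close>)
  have i2: "(\<Sum>t'\<in>L. M' t' s' * invol (M' t' r')) = (if s' = r' then 1 else 0)" if "r' \<in> L" for r'
    unfolding L_def M'_def by (rule I2[OF col]) (use that s' in \<open>auto simp: L_def\<close>)
  have gi: "(\<Sum>r\<in>K. if D p r t' then invol (M r q) else 0) = (\<Sum>r'\<in>L. if D p q r' then invol (M' t' r') else 0)"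
    if "q \<in> K" "t' \<in> L" for q t'
    using GrI[OF pp gr, of q t'] that unfolding K_def L_def M_def M'_def by simp
  have step1: "(if D p s t' then M' t' s' else 0)
      = M' t' s' * (\<Sum>r\<in>K. (if D p r t' then 1 else 0) * (\<Sum>q\<in>K. invol (M r q) * M s q))" for t'
  proof -
    have "(\<Sum>r\<in>K. (if D p r t' then 1 else 0) * (\<Sum>q\<in>K. invol (M r q) * M s q))
        = (\<Sum>r\<in>K. if r = s then (if D p r t' then 1 else 0) else 0)"
      by (rule sum.cong) (simp_all add: i1)
    also have "\<dots> = (if D p s t' then 1 else 0)" using sK fK by (simp add: sum.delta')
    finally show ?thesis by simp
  qed
  have step2: "M' t' s' * (\<Sum>r\<in>K. (if D p r t' then 1 else 0) * (\<Sum>q\<in>K. invol (M r q) * M s q))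
      = (\<Sum>q\<in>K. (M' t' s' * (\<Sum>r\<in>K. if D p r t' then invol (M r q) else 0)) * M s q)" for t'
  proof -
    have "M' t' s' * (\<Sum>r\<in>K. (if D p r t' then 1 else 0) * (\<Sum>q\<in>K. invol (M r q) * M s q))
        = (\<Sum>r\<in>K. \<Sum>q\<in>K. M' t' s' * (if D p r t' then invol (M r q) else 0) * M s q)"
      by (simp add: sum_distrib_left mult.assoc)
         (rule sum.cong[OF refl], rule sum.cong[OF refl], simp)
    also have "\<dots> = (\<Sum>q\<in>K. \<Sum>r\<in>K. M' t' s' * (if D p r t' then invol (M r q) else 0) * M s q)"
      by (rule sum.swap)
    also have "\<dots> = (\<Sum>q\<in>K. (M' t' s' * (\<Sum>r\<in>K. if D p r t' then invol (M r q) else 0)) * M s q)"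
      by (simp add: sum_distrib_left sum_distrib_right)
    finally show ?thesis .
  qed
  have "(\<Sum>t'\<in>L. if D p s t' then M' t' s' else 0)
      = (\<Sum>t'\<in>L. \<Sum>q\<in>K. (M' t' s' * (\<Sum>r'\<in>L. if D p q r' then invol (M' t' r') else 0)) * M s q)"
    by (rule sum.cong[OF refl]) (simp add: step1 step2 gi)
  also have "\<dots> = (\<Sum>q\<in>K. \<Sum>t'\<in>L. \<Sum>r'\<in>L. (if D p q r' then 1 else 0) * (M' t' s' * invol (M' t' r')) * M s q)"
    by (subst sum.swap) (simp add: sum_distrib_left sum_distrib_right mult.assoc,
        (rule sum.cong[OF refl])+, simp)
  also have "\<dots> = (\<Sum>q\<in>K. (\<Sum>r'\<in>L. (if D p q r' then 1 else 0) * (\<Sum>t'\<in>L. M' t' s' * invol (M' t' r'))) * M s q)"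
    by (rule sum.cong[OF refl], subst sum.swap) (simp add: sum_distrib_left sum_distrib_right)
  also have "\<dots> = (\<Sum>q\<in>K. (\<Sum>r'\<in>L. if r' = s' then (if D p q r' then 1 else 0) else 0) * M s q)"
    by (rule sum.cong[OF refl], rule arg_cong[where f = "\<lambda>x. x * _"], rule sum.cong[OF refl]) (auto simp: i2)
  also have "\<dots> = (\<Sum>q\<in>K. if D p q s' then M s q else 0)"
    using sL fL by (simp add: sum.delta') (rule sum.cong[OF refl], simp)
  finally have X: "(\<Sum>t'\<in>L. if D p s t' then M' t' s' else 0) = (\<Sum>q\<in>K. if D p q s' then M s q else 0)" .
  show ?thesis using X unfolding K_def L_def M_def M'_def .
qed



lemma cancel_nat:
  assumes "c > 0" "(of_nat c :: 'a::real_normed_algebra_1) * x = of_nat c * y"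
  shows "x = y"
proof -
  have "(of_nat c :: 'a) * z = real c *\<^sub>R z" for z
    by (simp add: scaleR_conv_of_real)
  then show ?thesis using assms by simp
qed

lemma lab_mono: "d \<le> N \<Longrightarrow> labelings d k \<subseteq> labelings N k"
  by (auto simp: labelings_def)

theorem theorem4p17:
  fixes N d :: nat and \<Pi> :: "partition set" and u :: "nat \<Rightarrow> nat \<Rightarrow> 'a::cstar_algebra"
  assumes "d \<le> N"
    and "\<forall>p \<in> \<Pi>. is_partition p"
    and "mixed_pairs \<subseteq> \<Pi>"
    and "\<forall>p \<in> \<Pi>. R_Gr N p u"
  shows "\<forall>p \<in> \<Pi>. R_Sp N d p u"
proof
  have mp: "R_Gr N q u" if "q \<in> mixed_pairs" for q using assms(3,4) that by auto
  have row: "(\<Sum>a\<in>{1..N}. invol (cpow c (u b a)) * cpow c (u e a)) = (if b = e then 1 else 0)"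
    if "b \<in> {1..N}" "e \<in> {1..N}" for c b e
  proof (cases c)
    case White
    have "R_Gr N (Part [] [Black, White] (pair_rel Lo)) u" by (rule mp) (simp add: mixed_pairs_def)
    from lo_pair[OF this that] show ?thesis using White by (simp add: cpow_def)
  next
    case Black
    have "R_Gr N (Part [] [White, Black] (pair_rel Lo)) u" by (rule mp) (simp add: mixed_pairs_def)
    from lo_pair[OF this that] show ?thesis using Black by (simp add: cpow_def invol_invol)
  qed
  have col: "(\<Sum>a\<in>{1..N}. cpow c (u a b) * invol (cpow c (u a e))) = (if b = e then 1 else 0)"
    if "b \<in> {1..N}" "e \<in> {1..N}" for c b e
  proof (cases c)
    case White
    have "R_Gr N (Part [White, Black] [] (pair_rel Up)) u" by (rule mp) (simp add: mixed_pairs_def)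
    from up_pair[OF this that] show ?thesis using White by (simp add: cpow_def)
  next
    case Black
    have "R_Gr N (Part [Black, White] [] (pair_rel Up)) u" by (rule mp) (simp add: mixed_pairs_def)
    from up_pair[OF this that] show ?thesis using Black by (simp add: cpow_def invol_invol)
  qed
  fix p assume p: "p \<in> \<Pi>"
  have pp: "is_partition p" and gr: "R_Gr N p u" using p assms by auto
  let ?k = "length (ucols p)" and ?l = "length (lcols p)"
  let ?M = "mono u (ucols p)" and ?M' = "mono u (lcols p)"
  have adj: "(\<Sum>t'\<in>labelings N ?l. if D p s t' then ?M' t' s' else 0)
       = (\<Sum>t\<in>labelings N ?k. if D p t s' then ?M s t else 0)"
    if "s \<in> labelings N ?k" "s' \<in> labelings N ?l" for s s'
    apply (rule Adj[OF pp gr])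
       apply (rule row, assumption+)
      apply (rule col, assumption+)
     apply (rule that)+
    done
  note grm = GrM[OF pp gr]
  have labd: "labelings d n \<subseteq> labelings N n" for n using lab_mono[OF assms(1)] .
  have TinL: "T N p f \<subseteq> labelings N ?k" for f unfolding T_def by (rule Collect_restrict)
  have T'inL: "T' N p f \<subseteq> labelings N ?l" for f unfolding T'_def by (rule Collect_restrict)
  have finT: "finite (T N p f)" for f by (rule finite_subset[OF TinL finite_lab])
  have p1: "(\<Sum>t\<in>T N p f. ?M t \<gamma>) = (\<Sum>t'\<in>T' N p f. ?M' t' \<gamma>')"
    if f: "f \<in> assignments N p" and g: "g \<in> assignments N p"
      and ga: "\<gamma> \<in> T N p g" and gb: "\<gamma>' \<in> T' N p g" for f g \<gamma> \<gamma>'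
  proof -
    define \<sigma>' where "\<sigma>' = relab p Lo f \<gamma>'"
    have s': "\<sigma>' \<in> T' N p f"
      using bij_betwE[OF TP_bij[OF pp f g, of Lo ?l]] gb by (simp add: \<sigma>'_def T'_P)
    define Z where "Z = (\<Sum>t'\<in>T' N p g. ?M' \<sigma>' t')"
    have X: "(\<Sum>t\<in>T N p f. ?M t \<rho>) = Z" if "\<rho> \<in> T N p g" for \<rho>
    proof -
      have a: "\<rho> \<in> labelings N ?k" using that TinL by blast
      have b: "\<sigma>' \<in> labelings N ?l" using s' T'inL by blast
      from grm[OF a b] show ?thesis unfolding sumD1[OF pp s'] sumD2[OF pp that] Z_def .
    qed
    have Y: "(\<Sum>t'\<in>T' N p f. ?M' t' \<gamma>') = (\<Sum>t\<in>T N p g. ?M \<sigma> t)" if "\<sigma> \<in> T N p f" for \<sigma>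
    proof -
      have a: "\<sigma> \<in> labelings N ?k" using that TinL by blast
      have b: "\<gamma>' \<in> labelings N ?l" using gb T'inL by blast
      from adj[OF a b] show ?thesis unfolding sumD1[OF pp gb] sumD2[OF pp that] .
    qed
    have card: "card (T N p f) = card (T N p g)"
      using bij_betw_same_card[OF TP_bij[OF pp f g, of Up ?k]] by (simp add: T_P)
    have cpos: "card (T N p g) > 0" using ga finT by (auto simp: card_gt_0_iff)
    have "of_nat (card (T N p f)) * (\<Sum>t'\<in>T' N p f. ?M' t' \<gamma>') = (\<Sum>\<sigma>\<in>T N p f. (\<Sum>t'\<in>T' N p f. ?M' t' \<gamma>'))"
      by simp
    also have "\<dots> = (\<Sum>\<sigma>\<in>T N p f. \<Sum>t\<in>T N p g. ?M \<sigma> t)"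
      by (rule sum.cong[OF refl], rule Y)
    also have "\<dots> = (\<Sum>t\<in>T N p g. \<Sum>\<sigma>\<in>T N p f. ?M \<sigma> t)" by (rule sum.swap)
    also have "\<dots> = (\<Sum>t\<in>T N p g. Z)" by (rule sum.cong[OF refl], rule X)
    also have "\<dots> = of_nat (card (T N p g)) * Z" by simp
    finally have "(\<Sum>t'\<in>T' N p f. ?M' t' \<gamma>') = Z"
      using cancel_nat[OF cpos] card by simp
    then show ?thesis using X[OF ga] by simp
  qed
  have p2: "(\<Sum>t\<in>T N p f. ?M t \<gamma>) = 0" if "f \<in> assignments N p" "\<gamma> \<in> T0 N p" for f \<gamma>
    using conjunct1[OF conjunct2[OF gr[unfolded R_Gr_def]]] that by blast
  have p3: "(\<Sum>t'\<in>T' N p f. ?M' t' \<gamma>') = 0"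
    if f: "f \<in> assignments N p" and ga: "\<gamma>' \<in> T0' N p \<inter> labelings d ?l" for f \<gamma>'
  proof -
    have nv: "\<not> valid_lo p \<gamma>'" using ga unfolding T0'_def by blast
    have gd: "\<gamma>' \<in> labelings d ?l" using ga by blast
    have gL: "\<gamma>' \<in> labelings N ?l" using gd labd by blast
    have lpos: "?l > 0"
    proof (rule ccontr)
      assume "\<not> ?l > 0"
      then have "?l = 0" by simp
      then have "valid_lo p \<gamma>'" unfolding valid_lo_def by simp
      then show False using nv by simp
    qed
    have len: "length \<gamma>' = ?l" and st: "set \<gamma>' \<subseteq> {1..d}" using gd unfolding labelings_def by auto
    have "\<gamma>' ! 0 \<in> set \<gamma>'" using lpos len by simp
    then have "\<gamma>' ! 0 \<in> {1..d}" using st by blast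
    then have "d \<ge> 1" by simp
    then have N1: "N \<ge> 1" using assms(1) by simp
    define \<sigma> where "\<sigma> = relab p Up f (replicate ?k 1)"
    have s: "\<sigma> \<in> T N p f" using TP_exists[OF pp f N1] by (simp add: \<sigma>_def T_P)
    have "(\<Sum>t'\<in>T' N p f. ?M' t' \<gamma>') = (\<Sum>t\<in>labelings N ?k. if D p t \<gamma>' then ?M \<sigma> t else 0)"
    proof -
      have a: "\<sigma> \<in> labelings N ?k" using s TinL by blast
      from adj[OF a gL] show ?thesis unfolding sumD2[OF pp s] .
    qed
    also have "\<dots> = 0"
    proof -
      have "\<not> D p t \<gamma>'" for t using nv unfolding D_def by blast
      then show ?thesis by simp
    qed
    finally show ?thesis .
  qed
  show "R_Sp N d p u"
    unfolding R_Sp_def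
  proof (intro conjI ballI)
    fix f g \<gamma> \<gamma>' assume "f \<in> assignments N p" "g \<in> assignments N p"
      "\<gamma> \<in> T N p g \<inter> labelings d ?k" "\<gamma>' \<in> T' N p g \<inter> labelings d ?l"
    then show "(\<Sum>t\<in>T N p f. ?M t \<gamma>) = (\<Sum>t'\<in>T' N p f. ?M' t' \<gamma>')"
      using p1 by blast
  next
    fix f \<gamma> assume "f \<in> assignments N p" "\<gamma> \<in> T0 N p \<inter> labelings d ?k"
    then show "(\<Sum>t\<in>T N p f. ?M t \<gamma>) = 0" using p2 by blast
  next
    fix f \<gamma>' assume "f \<in> assignments N p" "\<gamma>' \<in> T0' N p \<inter> labelings d ?l"
    then show "(\<Sum>t'\<in>T' N p f. ?M' t' \<gamma>') = 0" using p3 by blast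
  qed
qed

end
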